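(* Let $(Y_0,Y_1,U,Z)$ be random variables, let $D=\mathbb{1}[U\le \nu(Z)]$ for some unknown function $\nu$, and $Y=(1-D)Y_0+DY_1$, where $Z$ is discrete with support $\{z_0,z_1,\dots,z_K\}$. Assume: (1) $Z$ is independent of $U$; (2) $E[Y_d\mid Z,U]=E[Y_d\mid U]$ and $E|Y_d|<\infty$ for $d\in\{0,1\}$; (3) $U$ is continuously distributed; (4) $0<P(D=1\mid Z=z)<1$ for all $z\in\{z_0,\dots,z_K\}$; (5) for known continuous functions $h_1,\dots,h_M$ on $(0,1)$ and $d\in\{0,1\}$, $E[Y_d\mid F_U(U)=u]=\mu_d+\sum_{m=1}^M\rho_{dm}h_m(u)$ for $u\in(0,1)$, where $F_U$ is the distribution function of $U$; (6) the families $\{\lambda_{1m}\}_{m=0}^M$ and $\{\lambda_{0m}\}_{m=0}^M$ are each unisolvent on $(0,1)$; (7) $\bar K:=|\{P(D=1\mid Z=z):z=z_0,\dots,z_K\}|\ge M+1$. Then $\theta=(\theta_1',\theta_0')'$ with $\theta_d=(\mu_d,\rho_{d1},\dots,\rho_{dM})'$ is point identified from the distribution of $(Y,D,Z)$. More precisely, writing $p(z)=P(D=1\mid Z=z)$, for each $d\in\{0,1\}$ one has $\beta_d=A_d\theta_d$, the matrix $A_d$ has full column rank $M+1$, and hence $\theta_d$ is the unique solution of this linear system.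
   Context: Notation: $\lambda_{10}=\lambda_{00}\equiv 1$ and for $m=1,\dots,M$ and $p\in(0,1)$, $\lambda_{1m}(p)=\frac1p\int_0^p h_m(u)\,du$ and $\lambda_{0m}(p)=\frac{1}{1-p}\int_p^1 h_m(u)\,du$. A set of $n$ functions $f_1,\dots,f_n$ is unisolvent on a domain $\Omega$ if for every choice of $n$ distinct points $x_1,\dots,x_n\in\Omega$ the $n\times n$ matrix with entries $f_i(x_j)$ has nonzero determinant. $A_d$ is the $(K+1)\times(M+1)$ matrix whose $(\ell,m)$ entry ($\ell=0,\dots,K$, $m=0,\dots,M$) is $\lambda_{dm}(p(z_\ell))$, and $\beta_d=(E[Y\mid D=d,Z=z_0],\dots,E[Y\mid D=d,Z=z_K])'$. *)

theory Defs
  imports "HOL-Probability.Probability" "Jordan_Normal_Form.DL_Rank"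
begin

text \<open>lambda_{dm}(p) from the paper; by convention lambda_{d0} = 1.
  Here d is 1 or 0 (any d different from 1 is treated as 0).\<close>
definition lam :: "(nat \<Rightarrow> real \<Rightarrow> real) \<Rightarrow> nat \<Rightarrow> nat \<Rightarrow> real \<Rightarrow> real" where
  "lam h d m p =
     (if m = 0 then 1
      else if d = 1 then (1 / p) * (LBINT u=0..p. h m u)
      else (1 / (1 - p)) * (LBINT u=p..1. h m u))"

definition unisolvent :: "nat \<Rightarrow> (nat \<Rightarrow> real \<Rightarrow> real) \<Rightarrow> real set \<Rightarrow> bool" where
  "unisolvent n f S \<longleftrightarrow>
     (\<forall>x :: nat \<Rightarrow> real. (\<forall>j<n. x j \<in> S) \<and> inj_on x {..<n} \<longrightarrow>
        det (mat n n (\<lambda>(i, j). f i (x j))) \<noteq> 0)"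

definition cond_expect_event :: "'a measure \<Rightarrow> ('a \<Rightarrow> real) \<Rightarrow> ('a \<Rightarrow> bool) \<Rightarrow> real" where
  "cond_expect_event P X Q =
     (\<integral>\<omega>. X \<omega> * indicator {\<omega> \<in> space P. Q \<omega>} \<omega> \<partial>P) / measure P {\<omega> \<in> space P. Q \<omega>}"

end

theory Submission
  imports Defs "Jordan_Normal_Form.DL_Rank_Submatrix"
begin

lemma cdf_quantile:
  fixes F :: "real \<Rightarrow> real"
  assumes mono: "\<And>x y. x \<le> y \<Longrightarrow> F x \<le> F y" and cont: "\<And>x. isCont F x"
    and bot: "(F \<longlongrightarrow> 0) at_bot" and top: "(F \<longlongrightarrow> 1) at_top"
    and t: "0 < t" "t < 1"
  shows "\<exists>\<beta>. F \<beta> = t \<and> (\<forall>x. F x \<le> t \<longleftrightarrow> x \<le> \<beta>)"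
proof -
  have "eventually (\<lambda>x. F x < t) at_bot"
    using order_tendstoD(2)[OF bot t(1)] .
  then obtain a where a: "\<And>x. x \<le> a \<Longrightarrow> F x < t" by (auto simp: eventually_at_bot_linorder)
  have "eventually (\<lambda>x. F x > t) at_top"
    using order_tendstoD(1)[OF top t(2)] .
  then obtain b where b: "\<And>x. x \<ge> b \<Longrightarrow> F x > t" by (auto simp: eventually_at_top_linorder)
  have ab: "a \<le> b"
  proof (rule ccontr)
    assume "\<not> a \<le> b"
    then have "F b \<le> F a" using mono by simp
    with a[of a] b[of b] show False by simp
  qed
  have "continuous_on {a..b} F" using cont by (simp add: continuous_at_imp_continuous_on)
  then obtain x0 where x0: "F x0 = t"
    using IVT'[of F a t b] a[of a] b[of b] ab by force
  define S where "S = {x. F x \<le> t}"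
  have bdd: "bdd_above S"
  proof
    fix x assume "x \<in> S"
    show "x \<le> b"
    proof (rule ccontr)
      assume "\<not> x \<le> b" then have "F b \<le> F x" using mono by simp
      with b[of b] \<open>x \<in> S\<close> show False by (simp add: S_def)
    qed
  qed
  have x0S: "x0 \<in> S" using x0 by (simp add: S_def)
  define \<beta> where "\<beta> = Sup S"
  have up: "x \<le> \<beta>" if "x \<in> S" for x using cSup_upper[OF that bdd] by (simp add: \<beta>_def)
  have ge: "F \<beta> \<ge> t" using mono[OF up[OF x0S]] x0 by simp
  have le: "F \<beta> \<le> t"
  proof (rule ccontr)
    assume "\<not> F \<beta> \<le> t"
    then have e: "F \<beta> - t > 0" by simp
    from cont[of \<beta>] obtain d where d: "d > 0" "\<And>y. dist y \<beta> < d \<Longrightarrow> dist (F y) (F \<beta>) < F \<beta> - t"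
      unfolding continuous_at_eps_delta using e by blast
    have "\<beta> - d < Sup S" using d(1) by (simp add: \<beta>_def)
    then obtain y where y: "y \<in> S" "\<beta> - d < y" using less_cSupE[of "\<beta> - d" S] x0S by blast
    have "y \<le> \<beta>" using up[OF y(1)] .
    then have "dist y \<beta> < d" using y(2) by (simp add: dist_real_def)
    then have "dist (F y) (F \<beta>) < F \<beta> - t" using d(2) by blast
    moreover have "F y \<le> t" using y(1) by (simp add: S_def)
    ultimately show False by (simp add: dist_real_def)
  qed
  have "F x \<le> t \<longleftrightarrow> x \<le> \<beta>" for x
  proof
    assume "F x \<le> t" then show "x \<le> \<beta>" using up by (simp add: S_def)
  next
    assume "x \<le> \<beta>" then show "F x \<le> t" using mono[of x \<beta>] le by simp
  qed
  moreover have "F \<beta> = t" using le ge by simp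
  ultimately show ?thesis by blast
qed

lemma cdfU:
  assumes P: "prob_space P" and U[measurable]: "U \<in> borel_measurable P"
    and Uc: "\<And>x. measure P {\<omega> \<in> space P. U \<omega> = x} = 0"
  defines "F \<equiv> cdf (distr P borel U)"
  shows "\<And>x y. x \<le> y \<Longrightarrow> F x \<le> F y" "\<And>x. isCont F x" "(F \<longlongrightarrow> 0) at_bot"
    "(F \<longlongrightarrow> 1) at_top" "\<And>x. F x = measure P {\<omega> \<in> space P. U \<omega> \<le> x}"
    "\<And>x. 0 \<le> F x" "\<And>x. F x \<le> 1"
proof -
  interpret prob_space P by (rule P)
  interpret D: real_distribution "distr P borel U" by (rule real_distribution_distr) simp
  show "\<And>x y. x \<le> y \<Longrightarrow> F x \<le> F y" unfolding F_def by (rule D.cdf_nondecreasing)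
  show "(F \<longlongrightarrow> 0) at_bot" unfolding F_def by (rule D.cdf_lim_at_bot)
  show "(F \<longlongrightarrow> 1) at_top" unfolding F_def by (rule D.cdf_lim_at_top_prob)
  show "\<And>x. 0 \<le> F x" unfolding F_def by (rule D.cdf_nonneg)
  show "\<And>x. F x \<le> 1" unfolding F_def by (rule D.cdf_bounded_prob)
  show "\<And>x. isCont F x"
  proof -
    fix x
    have "measure (distr P borel U) {x} = measure P (U -` {x} \<inter> space P)"
      by (rule measure_distr) auto
    also have "U -` {x} \<inter> space P = {\<omega> \<in> space P. U \<omega> = x}" by auto
    finally show "isCont F x" unfolding F_def using D.isCont_cdf Uc by simp
  qed
  show "\<And>x. F x = measure P {\<omega> \<in> space P. U \<omega> \<le> x}"
  proof -
    fix x
    have "F x = measure (distr P borel U) {..x}" unfolding F_def by (simp add: cdf_def)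
    also have "\<dots> = measure P (U -` {..x} \<inter> space P)"
      by (rule measure_distr) auto
    also have "U -` {..x} \<inter> space P = {\<omega> \<in> space P. U \<omega> \<le> x}" by auto
    finally show "F x = measure P {\<omega> \<in> space P. U \<omega> \<le> x}" .
  qed
qed

lemma cdfU_uniform:
  assumes P: "prob_space P" and U[measurable]: "U \<in> borel_measurable P"
    and Uc: "\<And>x. measure P {\<omega> \<in> space P. U \<omega> = x} = 0"
  defines "F \<equiv> cdf (distr P borel U)"
  shows "distributed P lborel (\<lambda>\<omega>. F (U \<omega>)) (\<lambda>x. indicator {0..1} x / measure lborel {0..1::real})"
proof -
  interpret prob_space P by (rule P)
  note F = cdfU[OF P U Uc, folded F_def]
  have Fm[measurable]: "F \<in> borel_measurable borel" by (rule borel_measurable_mono, rule monoI, rule F(1))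
  have mid: "measure P {\<omega> \<in> space P. F (U \<omega>) \<le> t} = t" if t: "0 < t" "t < 1" for t
  proof -
    obtain \<beta> where b: "F \<beta> = t" "\<And>x. F x \<le> t \<longleftrightarrow> x \<le> \<beta>"
      using cdf_quantile[OF F(1-4) t] by blast
    have "{\<omega> \<in> space P. F (U \<omega>) \<le> t} = {\<omega> \<in> space P. U \<omega> \<le> \<beta>}" using b(2) by auto
    then show ?thesis using F(5)[of \<beta>] b(1) by simp
  qed
  show ?thesis
  proof (rule uniform_distrI_borel_atLeastAtMost)
    show "(\<lambda>\<omega>. F (U \<omega>)) \<in> borel_measurable P" by measurable
    show "(0::real) < 1" by simp
    fix t :: real assume t: "0 \<le> t" "t \<le> 1"
    have "measure P {\<omega> \<in> space P. F (U \<omega>) \<le> t} = t"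
    proof (cases "t = 1")
      case True
      then have "{\<omega> \<in> space P. F (U \<omega>) \<le> t} = space P" using F(7) by auto
      then show ?thesis using True by (simp add: prob_space)
    next
      case False
      show ?thesis
      proof (cases "t = 0")
        case False
        then show ?thesis using mid t \<open>t \<noteq> 1\<close> by simp
      next
        case True
        have "measure P {\<omega> \<in> space P. F (U \<omega>) \<le> 0} \<le> 0 + e" if e: "0 < e" for e
        proof (cases "e < 1")
          case True
          have "measure P {\<omega> \<in> space P. F (U \<omega>) \<le> 0} \<le> measure P {\<omega> \<in> space P. F (U \<omega>) \<le> e}"
            using e by (intro finite_measure_mono) auto
          then show ?thesis using mid[OF e True] by simp
        next
          case False
          have "prob {\<omega> \<in> space P. F (U \<omega>) \<le> 0} \<le> 1" by (rule prob_le_1)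
          then show ?thesis using False by linarith
        qed
        then have "measure P {\<omega> \<in> space P. F (U \<omega>) \<le> 0} \<le> 0" by (rule field_le_epsilon)
        then show ?thesis using True measure_nonneg[of P] by (simp add: antisym)
      qed
    qed
    then show "\<P>(x in P. F (U x) \<le> t) = (t - 0) / (1 - 0)" by simp
  qed
qed

lemma integrable_bdd_mult:
  fixes f g :: "'a \<Rightarrow> real"
  assumes "integrable M f" "g \<in> borel_measurable M" "\<And>x. \<bar>g x\<bar> \<le> 1"
  shows "integrable M (\<lambda>x. g x * f x)"
proof (rule Bochner_Integration.integrable_bound[OF assms(1)])
  show "(\<lambda>x. g x * f x) \<in> borel_measurable M"
    using assms(1,2) by measurable
  show "AE x in M. norm (g x * f x) \<le> norm (f x)"
    using assms(3) by (auto simp: abs_mult intro!: mult_left_le_one_le)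
qed

lemma indep_var_vimage:
  assumes P: "prob_space P" and ind: "prob_space.indep_var P borel U borel Z"
    and U[measurable]: "U \<in> borel_measurable P" and Z[measurable]: "Z \<in> borel_measurable P"
    and X1: "X1 \<in> borel_measurable (vimage_algebra (space P) U (borel :: real measure))"
    and X2: "X2 \<in> borel_measurable (vimage_algebra (space P) Z (borel :: real measure))"
  shows "prob_space.indep_var P borel X1 borel (X2 :: _ \<Rightarrow> real)"
proof -
  interpret prob_space P by (rule P)
  have subU: "subalgebra P (vimage_algebra (space P) U borel)"
    unfolding subalgebra_def using sets_image_in_sets[of P "space P" U borel] by auto
  have subZ: "subalgebra P (vimage_algebra (space P) Z borel)"
    unfolding subalgebra_def using sets_image_in_sets[of P "space P" Z borel] by auto
  have m1: "X1 \<in> borel_measurable P" by (rule measurable_from_subalg[OF subU X1])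
  have m2: "X2 \<in> borel_measurable P" by (rule measurable_from_subalg[OF subZ X2])
  have i: "indep_set (sigma_sets (space P) {U -` A \<inter> space P | A. A \<in> sets borel})
      (sigma_sets (space P) {Z -` A \<inter> space P | A. A \<in> sets borel})"
    using ind unfolding indep_var_eq by blast
  have s1: "sigma_sets (space P) {X1 -` A \<inter> space P | A. A \<in> sets (borel :: real measure)}
      \<subseteq> sigma_sets (space P) {U -` A \<inter> space P | A. A \<in> sets (borel :: real measure)}"
  proof -
    have "sigma_sets (space (vimage_algebra (space P) U (borel :: real measure))) {X1 -` A \<inter> space P | A. A \<in> sets (borel :: real measure)}
        \<subseteq> sets (vimage_algebra (space P) U (borel :: real measure))"
    proof (rule sets.sigma_sets_subset)
      show "{X1 -` A \<inter> space P | A. A \<in> sets (borel :: real measure)}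
          \<subseteq> sets (vimage_algebra (space P) U (borel :: real measure))"
        using measurable_sets[OF X1] by auto
    qed
    then show ?thesis by (simp add: sets_vimage_algebra)
  qed
  have s2: "sigma_sets (space P) {X2 -` A \<inter> space P | A. A \<in> sets (borel :: real measure)}
      \<subseteq> sigma_sets (space P) {Z -` A \<inter> space P | A. A \<in> sets (borel :: real measure)}"
  proof -
    have "sigma_sets (space (vimage_algebra (space P) Z (borel :: real measure))) {X2 -` A \<inter> space P | A. A \<in> sets (borel :: real measure)}
        \<subseteq> sets (vimage_algebra (space P) Z (borel :: real measure))"
    proof (rule sets.sigma_sets_subset)
      show "{X2 -` A \<inter> space P | A. A \<in> sets (borel :: real measure)}
          \<subseteq> sets (vimage_algebra (space P) Z (borel :: real measure))"
        using measurable_sets[OF X2] by auto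
    qed
    then show ?thesis by (simp add: sets_vimage_algebra)
  qed
  have "indep_set (sigma_sets (space P) {X1 -` A \<inter> space P | A. A \<in> sets (borel :: real measure)})
      (sigma_sets (space P) {X2 -` A \<inter> space P | A. A \<in> sets (borel :: real measure)})"
    using i unfolding indep_set_def
    by (rule indep_sets_mono_sets) (use s1 s2 in \<open>auto split: bool.split\<close>)
  then show ?thesis unfolding indep_var_eq using m1 m2 by simp
qed

lemma indep_step:
  fixes P :: "'a measure" and U Z Yd :: "'a \<Rightarrow> real" and J :: "real set"
  assumes P: "prob_space P" and ind: "prob_space.indep_var P borel U borel Z"
    and U[measurable]: "U \<in> borel_measurable P" and Z[measurable]: "Z \<in> borel_measurable P"
    and Y: "integrable P Yd"
    and mi: "AE \<omega> in P. real_cond_exp P (vimage_algebra (space P) (\<lambda>\<omega>. (Z \<omega>, U \<omega>)) borel) Yd \<omega>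
                    = real_cond_exp P (vimage_algebra (space P) U borel) Yd \<omega>"
    and J[measurable]: "J \<in> sets borel"
  shows "(\<integral>\<omega>. Yd \<omega> * indicator {\<omega> \<in> space P. U \<omega> \<in> J \<and> Z \<omega> = zl} \<omega> \<partial>P)
       = (\<integral>\<omega>. indicator J (U \<omega>) * Yd \<omega> \<partial>P) * measure P {\<omega> \<in> space P. Z \<omega> = zl}"
proof -
  interpret prob_space P by (rule P)
  define GZU where "GZU = vimage_algebra (space P) (\<lambda>\<omega>. (Z \<omega>, U \<omega>)) (borel :: (real \<times> real) measure)"
  define GU where "GU = vimage_algebra (space P) U (borel :: real measure)"
  have Ym[measurable]: "Yd \<in> borel_measurable P" using Y by (rule borel_measurable_integrable)
  have ZUm: "(\<lambda>\<omega>. (Z \<omega>, U \<omega>)) \<in> measurable P (borel :: (real \<times> real) measure)" by measurable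
  have subZU: "subalgebra P GZU"
    unfolding subalgebra_def GZU_def using sets_image_in_sets[OF _ ZUm] by auto
  have subU: "subalgebra P GU"
    unfolding subalgebra_def GU_def using sets_image_in_sets[of P "space P" U borel] by auto
  interpret A: finite_measure_subalgebra P GZU
    by (intro finite_measure_subalgebra.intro finite_measure_subalgebra_axioms.intro finite_measure_axioms subZU)
  interpret B: finite_measure_subalgebra P GU
    by (intro finite_measure_subalgebra.intro finite_measure_subalgebra_axioms.intro finite_measure_axioms subU)
  define chi where "chi = (\<lambda>\<omega>. indicator J (U \<omega>) * indicator {zl} (Z \<omega>) :: real)"
  define W where "W = real_cond_exp P GU Yd"
  have g: "(\<lambda>x :: real \<times> real. indicator J (snd x) * indicator {zl} (fst x) :: real) \<in> borel_measurable borel"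
    unfolding borel_prod[symmetric] by measurable
  have chiGZU: "chi \<in> borel_measurable GZU"
  proof -
    have "(\<lambda>x :: real \<times> real. indicator J (snd x) * indicator {zl} (fst x) :: real) \<circ> (\<lambda>\<omega>. (Z \<omega>, U \<omega>))
       \<in> borel_measurable GZU"
      unfolding GZU_def by (rule measurable_comp[OF measurable_vimage_algebra1 g]) simp
    then show ?thesis by (simp add: chi_def o_def)
  qed
  have chim[measurable]: "chi \<in> borel_measurable P" by (rule measurable_from_subalg[OF subZU chiGZU])
  have chib: "\<And>\<omega>. \<bar>chi \<omega>\<bar> \<le> 1" by (simp add: chi_def indicator_def)
  have "(\<integral>\<omega>. Yd \<omega> * indicator {\<omega> \<in> space P. U \<omega> \<in> J \<and> Z \<omega> = zl} \<omega> \<partial>P) = (\<integral>\<omega>. chi \<omega> * Yd \<omega> \<partial>P)"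
    by (rule Bochner_Integration.integral_cong) (auto simp: chi_def indicator_def)
  also have "\<dots> = (\<integral>\<omega>. chi \<omega> * real_cond_exp P GZU Yd \<omega> \<partial>P)"
    by (rule A.real_cond_exp_intg(2)[symmetric]) (use integrable_bdd_mult[OF Y chim chib] chiGZU in auto)
  also have "\<dots> = (\<integral>\<omega>. chi \<omega> * W \<omega> \<partial>P)"
  proof (rule integral_cong_AE)
    show "(\<lambda>\<omega>. chi \<omega> * real_cond_exp P GZU Yd \<omega>) \<in> borel_measurable P"
      using borel_measurable_cond_exp2 by measurable
    show "(\<lambda>\<omega>. chi \<omega> * W \<omega>) \<in> borel_measurable P"
      using borel_measurable_cond_exp2 unfolding W_def by measurable
    show "AE \<omega> in P. chi \<omega> * real_cond_exp P GZU Yd \<omega> = chi \<omega> * W \<omega>"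
      using mi unfolding GZU_def W_def GU_def by eventually_elim simp
  qed
  also have "\<dots> = (\<integral>\<omega>. (indicator J (U \<omega>) * W \<omega>) * indicator {zl} (Z \<omega>) \<partial>P)"
    by (rule Bochner_Integration.integral_cong) (auto simp: chi_def)
  also have "\<dots> = (\<integral>\<omega>. indicator J (U \<omega>) * W \<omega> \<partial>P) * (\<integral>\<omega>. indicator {zl} (Z \<omega>) \<partial>P)"
  proof (rule indep_var_lebesgue_integral)
    have iJ: "(\<lambda>\<omega>. indicator J (U \<omega>) :: real) \<in> borel_measurable GU"
    proof -
      have "(indicator J :: real \<Rightarrow> real) \<circ> U \<in> borel_measurable GU"
        unfolding GU_def by (rule measurable_comp[OF measurable_vimage_algebra1]) auto
      then show ?thesis by (simp add: o_def)
    qed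
    have X1: "(\<lambda>\<omega>. indicator J (U \<omega>) * W \<omega>) \<in> borel_measurable GU"
      using iJ borel_measurable_cond_exp unfolding W_def by measurable
    have X2: "(\<lambda>\<omega>. indicator {zl} (Z \<omega>) :: real) \<in> borel_measurable (vimage_algebra (space P) Z borel)"
    proof -
      have "(indicator {zl} :: real \<Rightarrow> real) \<circ> Z \<in> borel_measurable (vimage_algebra (space P) Z borel)"
        by (rule measurable_comp[OF measurable_vimage_algebra1]) auto
      then show ?thesis by (simp add: o_def)
    qed
    show "indep_var borel (\<lambda>\<omega>. indicator J (U \<omega>) * W \<omega>) borel (\<lambda>\<omega>. indicator {zl} (Z \<omega>) :: real)"
      by (rule indep_var_vimage[OF P ind U Z X1[unfolded GU_def] X2])
    show "integrable P (\<lambda>\<omega>. indicator J (U \<omega>) * W \<omega>)"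
      unfolding W_def by (rule B.real_cond_exp_intg(1)) (use integrable_bdd_mult[OF Y, of "\<lambda>\<omega>. indicator J (U \<omega>)"] iJ in \<open>auto simp: indicator_def\<close>)
    show "integrable P (\<lambda>\<omega>. indicator {zl} (Z \<omega>) :: real)"
      by (rule integrable_const_bound[where B=1]) (auto simp: indicator_def)
  qed
  also have "(\<integral>\<omega>. indicator J (U \<omega>) * W \<omega> \<partial>P) = (\<integral>\<omega>. indicator J (U \<omega>) * Yd \<omega> \<partial>P)"
  proof -
    have iJ: "(\<lambda>\<omega>. indicator J (U \<omega>) :: real) \<in> borel_measurable GU"
    proof -
      have "(indicator J :: real \<Rightarrow> real) \<circ> U \<in> borel_measurable GU"
        unfolding GU_def by (rule measurable_comp[OF measurable_vimage_algebra1]) auto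
      then show ?thesis by (simp add: o_def)
    qed
    show ?thesis
      unfolding W_def by (rule B.real_cond_exp_intg(2)) (use integrable_bdd_mult[OF Y, of "\<lambda>\<omega>. indicator J (U \<omega>)"] iJ in \<open>auto simp: indicator_def\<close>)
  qed
  also have "(\<integral>\<omega>. indicator {zl} (Z \<omega>) \<partial>P) = measure P {\<omega> \<in> space P. Z \<omega> = zl}"
  proof -
    have "(\<integral>\<omega>. indicator {zl} (Z \<omega>) \<partial>P) = (\<integral>\<omega>. indicator {\<omega> \<in> space P. Z \<omega> = zl} \<omega> \<partial>P)"
      by (rule Bochner_Integration.integral_cong) (auto simp: indicator_def)
    also have "\<dots> = measure P {\<omega> \<in> space P. Z \<omega> = zl}"
      by (simp add: Int_absorb2)
    finally show ?thesis .
  qed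
  finally show ?thesis .
qed

lemma V_integral:
  fixes P :: "'a measure" and U Yd :: "'a \<Rightarrow> real" and I :: "real set"
    and h :: "nat \<Rightarrow> real \<Rightarrow> real" and \<mu>0 :: real and \<rho>0 :: "nat \<Rightarrow> real"
  assumes P: "prob_space P" and U[measurable]: "U \<in> borel_measurable P"
    and Uc: "\<And>x. measure P {\<omega> \<in> space P. U \<omega> = x} = 0"
    and Y: "integrable P Yd"
    and MTE: "AE \<omega> in P. real_cond_exp P (vimage_algebra (space P) (\<lambda>\<omega>. cdf (distr P borel U) (U \<omega>)) borel) Yd \<omega>
                    = \<mu>0 + (\<Sum>m = 1..M. \<rho>0 m * h m (cdf (distr P borel U) (U \<omega>)))"
    and h_int: "\<And>m. m \<in> {1..M} \<Longrightarrow> set_integrable lborel {0<..<1} (h m)"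
    and I[measurable]: "I \<in> sets borel"
  shows "(\<integral>\<omega>. indicator I (cdf (distr P borel U) (U \<omega>)) * Yd \<omega> \<partial>P)
       = \<mu>0 * measure lborel ({0..1} \<inter> I) + (\<Sum>m = 1..M. \<rho>0 m * (\<integral>x \<in> {0<..<1} \<inter> I. h m x \<partial>lborel))"
proof -
  interpret prob_space P by (rule P)
  define F where "F = cdf (distr P borel U)"
  have Ym[measurable]: "Yd \<in> borel_measurable P" using Y by (rule borel_measurable_integrable)
  note Fp = cdfU[OF P U Uc, folded F_def]
  have Fm[measurable]: "F \<in> borel_measurable borel" by (rule borel_measurable_mono, rule monoI, rule Fp(1))
  define V where "V = (\<lambda>\<omega>. F (U \<omega>))"
  have Vm[measurable]: "V \<in> borel_measurable P" unfolding V_def by measurable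
  have dist: "distributed P lborel V (\<lambda>x. ennreal (indicator {0..1} x))"
    using cdfU_uniform[OF P U Uc] unfolding V_def F_def by simp
  define GV where "GV = vimage_algebra (space P) V (borel :: real measure)"
  have subV: "subalgebra P GV"
    unfolding subalgebra_def GV_def using sets_image_in_sets[of P "space P" V borel] by auto
  interpret C: finite_measure_subalgebra P GV
    by (intro finite_measure_subalgebra.intro finite_measure_subalgebra_axioms.intro finite_measure_axioms subV)
  define h' where "h' = (\<lambda>m x. indicator {0<..<1::real} x * h m x)"
  have h'm[measurable]: "h' m \<in> borel_measurable borel" if "m \<in> {1..M}" for m
  proof -
    have "(\<lambda>x. indicator {0<..<1::real} x *\<^sub>R h m x) \<in> borel_measurable lborel"
      using h_int[OF that] unfolding set_integrable_def by (rule borel_measurable_integrable)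
    then show ?thesis unfolding h'_def by simp
  qed
  have AEV: "AE \<omega> in P. V \<omega> \<in> {0<..<1}"
  proof (rule AE_distrD[OF distributed_measurable[OF dist]])
    have "AE x in lborel. 0 < ennreal (indicator {0..1} x) \<longrightarrow> x \<in> {0<..<1::real}"
      using AE_lborel_singleton[of "0::real"] AE_lborel_singleton[of "1::real"]
      by eventually_elim (auto simp: indicator_def)
    then show "AE x in distr P lborel V. x \<in> {0<..<1}"
      unfolding distributed_distr_eq_density[OF dist]
      by (subst AE_density) (use distributed_borel_measurable[OF dist] in auto)
  qed
  define G where "G = (\<lambda>x. indicator I x * (\<mu>0 + (\<Sum>m = 1..M. \<rho>0 m * h' m x)))"
  have Gm[measurable]: "G \<in> borel_measurable borel" unfolding G_def
    by (intro borel_measurable_times borel_measurable_add borel_measurable_sum borel_measurable_indicator) auto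
  have iI: "(\<lambda>\<omega>. indicator I (V \<omega>) :: real) \<in> borel_measurable GV"
  proof -
    have "(indicator I :: real \<Rightarrow> real) \<circ> V \<in> borel_measurable GV"
      unfolding GV_def by (rule measurable_comp[OF measurable_vimage_algebra1]) auto
    then show ?thesis by (simp add: o_def)
  qed
  have "(\<integral>\<omega>. indicator I (V \<omega>) * Yd \<omega> \<partial>P) = (\<integral>\<omega>. indicator I (V \<omega>) * real_cond_exp P GV Yd \<omega> \<partial>P)"
    by (rule C.real_cond_exp_intg(2)[symmetric])
      (use integrable_bdd_mult[OF Y, of "\<lambda>\<omega>. indicator I (V \<omega>)"] iI in \<open>auto simp: indicator_def\<close>)
  also have "\<dots> = (\<integral>\<omega>. G (V \<omega>) \<partial>P)"
  proof (rule integral_cong_AE)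
    show "(\<lambda>\<omega>. indicator I (V \<omega>) * real_cond_exp P GV Yd \<omega>) \<in> borel_measurable P"
      using borel_measurable_cond_exp2 by measurable
    show "(\<lambda>\<omega>. G (V \<omega>)) \<in> borel_measurable P" by measurable
    show "AE \<omega> in P. indicator I (V \<omega>) * real_cond_exp P GV Yd \<omega> = G (V \<omega>)"
      using MTE AEV unfolding GV_def V_def F_def
      by eventually_elim (auto simp: G_def h'_def)
  qed
  also have "\<dots> = (\<integral>x. indicator {0..1} x * G x \<partial>lborel)"
    by (rule distributed_integral[OF dist, symmetric]) auto
  also have "\<dots> = (\<integral>x. \<mu>0 * indicator ({0..1} \<inter> I) x
        + (\<Sum>m = 1..M. \<rho>0 m * (indicator ({0<..<1} \<inter> I) x *\<^sub>R h m x)) \<partial>lborel)"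
    by (rule Bochner_Integration.integral_cong) (auto simp: G_def h'_def indicator_def)
  also have "\<dots> = \<mu>0 * measure lborel ({0..1} \<inter> I) + (\<Sum>m = 1..M. \<rho>0 m * (\<integral>x \<in> {0<..<1} \<inter> I. h m x \<partial>lborel))"
  proof -
    have i1: "integrable lborel (\<lambda>x. \<mu>0 * indicator ({0..1} \<inter> I) x)"
    proof -
      have "emeasure lborel ({0..1} \<inter> I) \<le> emeasure lborel {0..1::real}"
        by (rule emeasure_mono) auto
      then have "emeasure lborel ({0..1} \<inter> I) < \<infinity>" by (simp add: order_le_less_trans)
      then show ?thesis by (intro integrable_mult_right integrable_real_indicator) auto
    qed
    have i2: "integrable lborel (\<lambda>x. \<rho>0 m * (indicator ({0<..<1} \<inter> I) x *\<^sub>R h m x))" if "m \<in> {1..M}" for m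
    proof -
      have "set_integrable lborel ({0<..<1} \<inter> I) (h m)"
        by (rule set_integrable_subset[OF h_int[OF that]]) auto
      then show ?thesis unfolding set_integrable_def by (rule integrable_mult_right)
    qed
    have "(\<integral>x. \<mu>0 * indicator ({0..1} \<inter> I) x
        + (\<Sum>m = 1..M. \<rho>0 m * (indicator ({0<..<1} \<inter> I) x *\<^sub>R h m x)) \<partial>lborel)
      = (\<integral>x. \<mu>0 * indicator ({0..1} \<inter> I) x \<partial>lborel)
        + (\<integral>x. (\<Sum>m = 1..M. \<rho>0 m * (indicator ({0<..<1} \<inter> I) x *\<^sub>R h m x)) \<partial>lborel)"
      by (rule Bochner_Integration.integral_add[OF i1]) (use i2 in auto)
    also have "(\<integral>x. (\<Sum>m = 1..M. \<rho>0 m * (indicator ({0<..<1} \<inter> I) x *\<^sub>R h m x)) \<partial>lborel)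
        = (\<Sum>m = 1..M. (\<integral>x. \<rho>0 m * (indicator ({0<..<1} \<inter> I) x *\<^sub>R h m x) \<partial>lborel))"
      by (rule Bochner_Integration.integral_sum) (use i2 in auto)
    also have "(\<integral>x. \<mu>0 * indicator ({0..1} \<inter> I) x \<partial>lborel) = \<mu>0 * measure lborel ({0..1} \<inter> I)"
      by simp
    finally show ?thesis by (simp add: set_lebesgue_integral_def)
  qed
  finally show ?thesis unfolding V_def F_def .
qed

lemma UV_switch:
  fixes P :: "'a measure" and U Yd :: "'a \<Rightarrow> real" and c :: real
  assumes P: "prob_space P" and U[measurable]: "U \<in> borel_measurable P"
    and Uc: "\<And>x. measure P {\<omega> \<in> space P. U \<omega> = x} = 0"
    and Y: "integrable P Yd"
    and q: "0 < cdf (distr P borel U) c" "cdf (distr P borel U) c < 1"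
  shows "(\<integral>\<omega>. indicator {..c} (U \<omega>) * Yd \<omega> \<partial>P)
       = (\<integral>\<omega>. indicator {..cdf (distr P borel U) c} (cdf (distr P borel U) (U \<omega>)) * Yd \<omega> \<partial>P)"
    and "(\<integral>\<omega>. indicator {c<..} (U \<omega>) * Yd \<omega> \<partial>P)
       = (\<integral>\<omega>. indicator {cdf (distr P borel U) c<..} (cdf (distr P borel U) (U \<omega>)) * Yd \<omega> \<partial>P)"
proof -
  interpret prob_space P by (rule P)
  define F where "F = cdf (distr P borel U)"
  have Ym[measurable]: "Yd \<in> borel_measurable P" using Y by (rule borel_measurable_integrable)
  note Fp = cdfU[OF P U Uc, folded F_def]
  have Fm[measurable]: "F \<in> borel_measurable borel" by (rule borel_measurable_mono, rule monoI, rule Fp(1))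
  obtain \<beta> where b: "F \<beta> = F c" "\<And>x. F x \<le> F c \<longleftrightarrow> x \<le> \<beta>"
    using cdf_quantile[OF Fp(1-4) q[folded F_def]] by blast
  have cb: "c \<le> \<beta>" using b(2)[of c] by simp
  define N where "N = {\<omega> \<in> space P. c < U \<omega> \<and> U \<omega> \<le> \<beta>}"
  have Ns: "N \<in> sets P" unfolding N_def by measurable
  have "{\<omega> \<in> space P. U \<omega> \<le> \<beta>} = {\<omega> \<in> space P. U \<omega> \<le> c} \<union> N"
    using cb unfolding N_def by auto
  then have "measure P {\<omega> \<in> space P. U \<omega> \<le> \<beta>} = measure P {\<omega> \<in> space P. U \<omega> \<le> c} + measure P N"
    using Ns by (simp add: finite_measure_Union N_def disjoint_iff)
  then have "measure P N = 0" using Fp(5)[of \<beta>] Fp(5)[of c] b(1) by simp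
  then have "N \<in> null_sets P" using Ns by (simp add: emeasure_eq_measure null_sets_def)
  then have AEN: "AE \<omega> in P. \<omega> \<notin> N" by (rule AE_not_in)
  have key: "(F (U \<omega>) \<le> F c) \<longleftrightarrow> U \<omega> \<le> c" if "\<omega> \<in> space P" "\<omega> \<notin> N" for \<omega>
    using b(2)[of "U \<omega>"] that cb unfolding N_def by auto
  show "(\<integral>\<omega>. indicator {..c} (U \<omega>) * Yd \<omega> \<partial>P)
       = (\<integral>\<omega>. indicator {..cdf (distr P borel U) c} (cdf (distr P borel U) (U \<omega>)) * Yd \<omega> \<partial>P)"
    unfolding F_def[symmetric]
  proof (rule integral_cong_AE)
    show "AE \<omega> in P. indicator {..c} (U \<omega>) * Yd \<omega> = indicator {..F c} (F (U \<omega>)) * Yd \<omega>"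
      using AEN by (rule AE_mp) (auto intro!: AE_I2 simp: indicator_def key)
  qed measurable
  show "(\<integral>\<omega>. indicator {c<..} (U \<omega>) * Yd \<omega> \<partial>P)
       = (\<integral>\<omega>. indicator {cdf (distr P borel U) c<..} (cdf (distr P borel U) (U \<omega>)) * Yd \<omega> \<partial>P)"
    unfolding F_def[symmetric]
  proof (rule integral_cong_AE)
    show "AE \<omega> in P. indicator {c<..} (U \<omega>) * Yd \<omega> = indicator {F c<..} (F (U \<omega>)) * Yd \<omega>"
      using AEN by (rule AE_mp) (auto intro!: AE_I2 simp: indicator_def key not_le[symmetric])
  qed measurable
qed

lemma linalg:
  fixes f :: "nat \<Rightarrow> real \<Rightarrow> real" and x :: "nat \<Rightarrow> real" and K n :: nat and S :: "real set"
  assumes uni: "unisolvent n f S" and xS: "\<And>l. l \<le> K \<Longrightarrow> x l \<in> S"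
    and card: "card (x ` {0..K}) \<ge> n"
  defines "A \<equiv> mat (K + 1) n (\<lambda>(l, m). f m (x l))"
  shows "vec_space.rank (K + 1) A = n"
    and "\<And>t s. t \<in> carrier_vec n \<Longrightarrow> s \<in> carrier_vec n \<Longrightarrow> A *\<^sub>v t = A *\<^sub>v s \<Longrightarrow> t = s"
proof -
  have Ac: "A \<in> carrier_mat (K + 1) n" unfolding A_def by simp
  obtain T where T: "T \<subseteq> x ` {0..K}" "card T = n" "finite T"
    using obtain_subset_with_card_n[OF card] by blast
  define R where "R = inv_into {0..K} x ` T"
  have RK: "R \<subseteq> {0..K}" unfolding R_def using T(1) by (auto intro: inv_into_into)
  have injinv: "inj_on (inv_into {0..K} x) T" using T(1) by (rule inj_on_inv_into)
  have cR: "card R = n" unfolding R_def using card_image[OF injinv] T(2) by simp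
  have injx: "inj_on x R"
  proof (rule inj_onI)
    fix a b assume "a \<in> R" "b \<in> R" "x a = x b"
    then obtain ta tb where "ta \<in> T" "tb \<in> T" "a = inv_into {0..K} x ta" "b = inv_into {0..K} x tb"
      unfolding R_def by blast
    moreover have "x (inv_into {0..K} x ta) = ta" "x (inv_into {0..K} x tb) = tb"
      using T(1) \<open>ta \<in> T\<close> \<open>tb \<in> T\<close> by (auto intro: f_inv_into_f)
    ultimately show "a = b" using \<open>x a = x b\<close> by simp
  qed
  have dA: "dim_row A = K + 1" "dim_col A = n" using Ac by auto
  have rowset: "{i. i < dim_row A \<and> i \<in> R} = R"
  proof -
    have "\<And>i. i \<in> R \<Longrightarrow> i < K + 1" using RK by auto
    then show ?thesis unfolding dA by blast
  qed
  have colset: "{j. j < dim_col A \<and> j \<in> UNIV} = {..<n}" unfolding dA by blast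
  define B where "B = submatrix A R UNIV"
  have dB: "dim_row B = n" "dim_col B = n" unfolding B_def dim_submatrix rowset colset using cR by simp_all
  have Bc: "B \<in> carrier_mat n n" using dB by (intro carrier_matI)
  have Bidx: "B $$ (i, j) = f j (x (pick R i))" if "i < n" "j < n" for i j
  proof -
    have i1: "i < card {i. i < dim_row A \<and> i \<in> R}" unfolding rowset cR by (rule that)
    have j1: "j < card {j. j < dim_col A \<and> j \<in> UNIV}" unfolding colset using that by simp
    have "B $$ (i, j) = A $$ (pick R i, pick UNIV j)" unfolding B_def
      by (rule submatrix_index[OF i1 j1])
    moreover have "pick R i \<in> R" using pick_in_set_le[of i R] that cR by simp
    then have "pick R i < K + 1" using RK by auto
    ultimately show ?thesis using that by (simp add: A_def pick_UNIV)
  qed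
  define y where "y = (\<lambda>j. x (pick R j))"
  have yS: "\<forall>j<n. y j \<in> S"
  proof (intro allI impI)
    fix j assume "j < n"
    then have "pick R j \<in> R" using pick_in_set_le[of j R] cR by simp
    then show "y j \<in> S" using RK xS unfolding y_def by auto
  qed
  have yinj: "inj_on y {..<n}"
  proof (rule inj_onI)
    fix a b assume ab: "a \<in> {..<n}" "b \<in> {..<n}" "y a = y b"
    have "pick R a \<in> R" "pick R b \<in> R" using pick_in_set_le[of _ R] ab cR by auto
    then have "pick R a = pick R b" using injx ab(3) unfolding y_def by (auto dest: inj_onD)
    then show "a = b" using pick_mono_le[of a R b] pick_mono_le[of b R a] ab cR
      by (metis lessThan_iff linorder_neqE_nat order_less_irrefl)
  qed
  have "det (mat n n (\<lambda>(i, j). f i (y j))) \<noteq> 0"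
    using uni yS yinj unfolding unisolvent_def by blast
  moreover have "B = transpose_mat (mat n n (\<lambda>(i, j). f i (y j)))"
    by (rule eq_matI) (simp_all add: dB Bidx y_def)
  ultimately have detB: "det B \<noteq> 0" using det_transpose[of "mat n n (\<lambda>(i, j). f i (y j))" n] by simp
  have "card {j. j < n \<and> j \<in> UNIV} \<le> vec_space.rank (K + 1) A"
    using vec_space.rank_gt_minor[OF Ac, of R UNIV] detB unfolding B_def by simp
  moreover have "vec_space.rank (K + 1) A \<le> n" by (rule vec_space.rank_le_nc[OF Ac])
  ultimately show "vec_space.rank (K + 1) A = n" by simp
  fix t s :: "real vec" assume ts: "t \<in> carrier_vec n" "s \<in> carrier_vec n" "A *\<^sub>v t = A *\<^sub>v s"
  have "B *\<^sub>v (t - s) = 0\<^sub>v n"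
  proof (rule eq_vecI)
    show "dim_vec (B *\<^sub>v (t - s)) = dim_vec (0\<^sub>v n)" using Bc by simp
    fix i assume "i < dim_vec (0\<^sub>v n)"
    then have i: "i < n" by simp
    have pr: "pick R i < K + 1" using pick_in_set_le[of i R] i cR RK by auto
    have "(B *\<^sub>v (t - s)) $ i = (\<Sum>j<n. B $$ (i, j) * (t - s) $ j)"
      using Bc ts i by (simp add: scalar_prod_def atLeast0LessThan)
    also have "\<dots> = (\<Sum>j<n. A $$ (pick R i, j) * t $ j) - (\<Sum>j<n. A $$ (pick R i, j) * s $ j)"
      unfolding sum_subtractf[symmetric]
      by (rule sum.cong) (use ts i pr in \<open>auto simp: Bidx A_def right_diff_distrib\<close>)
    also have "(\<Sum>j<n. A $$ (pick R i, j) * t $ j) = (A *\<^sub>v t) $ pick R i"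
      using Ac ts(1,2) pr by (simp add: scalar_prod_def atLeast0LessThan)
    also have "(\<Sum>j<n. A $$ (pick R i, j) * s $ j) = (A *\<^sub>v s) $ pick R i"
      using Ac ts(1,2) pr by (simp add: scalar_prod_def atLeast0LessThan)
    finally show "(B *\<^sub>v (t - s)) $ i = 0\<^sub>v n $ i" using ts(3) i by simp
  qed
  moreover have "t - s \<in> carrier_vec n" using ts by simp
  ultimately have "t - s = 0\<^sub>v n"
    using det_0_iff_vec_prod_zero[OF Bc] detB by blast
  show "t = s"
  proof (rule eq_vecI)
    show "dim_vec t = dim_vec s" using ts by simp
    fix j assume j: "j < dim_vec s"
    have "(t - s) $ j = 0" using \<open>t - s = 0\<^sub>v n\<close> j ts by simp
    then show "t $ j = s $ j" using j ts by simp
  qed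
qed

lemma row_arith:
  fixes len PZ \<mu>0 :: real and \<rho>0 L lamv :: "nat \<Rightarrow> real"
  assumes "len > 0" "PZ > 0" "lamv 0 = 1" "\<And>m. m \<in> {1..M} \<Longrightarrow> lamv m = 1 / len * L m"
  shows "(\<mu>0 * len + (\<Sum>m = 1..M. \<rho>0 m * L m)) * PZ / (len * PZ)
       = (\<Sum>j<M + 1. lamv j * (if j = 0 then \<mu>0 else \<rho>0 j))"
proof -
  have e: "{..<M + 1} = insert 0 {1..M}" by auto
  have "(\<Sum>j<M + 1. lamv j * (if j = 0 then \<mu>0 else \<rho>0 j)) = \<mu>0 + (\<Sum>m = 1..M. lamv m * \<rho>0 m)"
    unfolding e using assms(3) by (subst sum.insert) auto
  also have "(\<Sum>m = 1..M. lamv m * \<rho>0 m) = (\<Sum>m = 1..M. \<rho>0 m * L m) / len"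
    unfolding sum_divide_distrib by (rule sum.cong) (use assms(4) in auto)
  finally show ?thesis using assms(1,2) by (simp add: field_simps)
qed

theorem theorem1:
  fixes P :: "'a measure"
    and Yp :: "nat \<Rightarrow> 'a \<Rightarrow> real"   \<comment> \<open>Yp 0 = Y_0, Yp 1 = Y_1\<close>
    and U Z :: "'a \<Rightarrow> real"
    and \<nu> :: "real \<Rightarrow> real"
    and K M :: nat
    and z :: "nat \<Rightarrow> real"
    and h :: "nat \<Rightarrow> real \<Rightarrow> real"
    and \<mu> :: "nat \<Rightarrow> real"
    and \<rho> :: "nat \<Rightarrow> nat \<Rightarrow> real"
    and D Y :: "'a \<Rightarrow> real"
    and F\<^sub>U p :: "real \<Rightarrow> real"
    and A :: "nat \<Rightarrow> real mat"
    and \<beta> \<theta> :: "nat \<Rightarrow> real vec"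
  defines "D \<equiv> (\<lambda>\<omega>. if U \<omega> \<le> \<nu> (Z \<omega>) then 1 else 0)"
    and "Y \<equiv> (\<lambda>\<omega>. (1 - D \<omega>) * Yp 0 \<omega> + D \<omega> * Yp 1 \<omega>)"
    and "F\<^sub>U \<equiv> cdf (distr P borel U)"
    and "p \<equiv> (\<lambda>x. cond_prob P (\<lambda>\<omega>. D \<omega> = 1) (\<lambda>\<omega>. Z \<omega> = x))"
    and "A \<equiv> (\<lambda>d. mat (K + 1) (M + 1) (\<lambda>(l, m). lam h d m (p (z l))))"
    and "\<beta> \<equiv> (\<lambda>d. vec (K + 1)
                 (\<lambda>l. cond_expect_event P Y (\<lambda>\<omega>. D \<omega> = real d \<and> Z \<omega> = z l)))"
    and "\<theta> \<equiv> (\<lambda>d. vec (M + 1) (\<lambda>m. if m = 0 then \<mu> d else \<rho> d m))"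
  assumes prob: "prob_space P"
    and meas_Y: "\<And>d. d \<in> {0, 1} \<Longrightarrow> Yp d \<in> borel_measurable P"
    and meas_U: "U \<in> borel_measurable P"
    and meas_Z: "Z \<in> borel_measurable P"
    and meas_\<nu>: "\<nu> \<in> borel_measurable borel"
    \<comment> \<open>Z is discrete with support {z_0,...,z_K}\<close>
    and z_inj: "inj_on z {0..K}"
    and Z_supp: "measure P {\<omega> \<in> space P. Z \<omega> \<in> z ` {0..K}} = 1"
    and Z_pos: "\<And>l. l \<le> K \<Longrightarrow> measure P {\<omega> \<in> space P. Z \<omega> = z l} > 0"
    \<comment> \<open>(1)\<close>
    and indep: "prob_space.indep_var P borel U borel Z"
    \<comment> \<open>(2)\<close>
    and mean_indep: "\<And>d. d \<in> {0, 1} \<Longrightarrow>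
          AE \<omega> in P. real_cond_exp P (vimage_algebra (space P) (\<lambda>\<omega>. (Z \<omega>, U \<omega>)) borel) (Yp d) \<omega>
                    = real_cond_exp P (vimage_algebra (space P) U borel) (Yp d) \<omega>"
    and integ: "\<And>d. d \<in> {0, 1} \<Longrightarrow> integrable P (Yp d)"
    \<comment> \<open>(3)\<close>
    and U_cont: "\<And>x. measure P {\<omega> \<in> space P. U \<omega> = x} = 0"
    \<comment> \<open>(4)\<close>
    and p_bounds: "\<And>l. l \<le> K \<Longrightarrow> 0 < p (z l) \<and> p (z l) < 1"
    \<comment> \<open>(5)\<close>
    and h_cont: "\<And>m. m \<in> {1..M} \<Longrightarrow> continuous_on {0<..<1} (h m)"
    and h_int: "\<And>m. m \<in> {1..M} \<Longrightarrow> set_integrable lborel {0<..<1} (h m)"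
    and MTE: "\<And>d. d \<in> {0, 1} \<Longrightarrow>
          AE \<omega> in P. real_cond_exp P (vimage_algebra (space P) (\<lambda>\<omega>. F\<^sub>U (U \<omega>)) borel) (Yp d) \<omega>
                    = \<mu> d + (\<Sum>m = 1..M. \<rho> d m * h m (F\<^sub>U (U \<omega>)))"
    \<comment> \<open>(6)\<close>
    and unisolv: "\<And>d. d \<in> {0, 1} \<Longrightarrow> unisolvent (M + 1) (lam h d) {0<..<1}"
    \<comment> \<open>(7)\<close>
    and rank_cond: "card (p ` z ` {0..K}) \<ge> M + 1"
  shows "\<forall>d \<in> {0, 1}.
           \<beta> d = A d *\<^sub>v \<theta> d
         \<and> vec_space.rank (K + 1) (A d) = M + 1
         \<and> (\<forall>t \<in> carrier_vec (M + 1). A d *\<^sub>v t = \<beta> d \<longrightarrow> t = \<theta> d)"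

proof -
  interpret prob_space P by (rule prob)
  note Fp = cdfU[OF prob meas_U U_cont, folded F\<^sub>U_def]
  have PUZ: "measure P {\<omega> \<in> space P. U \<omega> \<in> J \<and> Z \<omega> = zz}
      = measure P {\<omega> \<in> space P. U \<omega> \<in> J} * measure P {\<omega> \<in> space P. Z \<omega> = zz}"
    if J: "J \<in> sets borel" for J zz
  proof -
    have e1: "{\<omega> \<in> space P. U \<omega> \<in> J \<and> Z \<omega> = zz} = (\<lambda>\<omega>. (U \<omega>, Z \<omega>)) -` (J \<times> {zz}) \<inter> space P" by auto
    have e2: "U -` J \<inter> space P = {\<omega> \<in> space P. U \<omega> \<in> J}" by auto
    have e3: "Z -` {zz} \<inter> space P = {\<omega> \<in> space P. Z \<omega> = zz}" by auto
    show ?thesis using indep_varD[OF indep, of J "{zz}"] J unfolding e1 e2 e3 by simp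
  qed
  have PU1: "measure P {\<omega> \<in> space P. U \<omega> \<in> {..c}} = F\<^sub>U c" for c
    using Fp(5)[of c] by simp
  have PU0: "measure P {\<omega> \<in> space P. U \<omega> \<in> {c<..}} = 1 - F\<^sub>U c" for c
  proof -
    have "{\<omega> \<in> space P. U \<omega> \<in> {c<..}} = space P - {\<omega> \<in> space P. U \<omega> \<le> c}" by auto
    then show ?thesis using prob_compl[of "{\<omega> \<in> space P. U \<omega> \<le> c}"] Fp(5)[of c] meas_U by simp
  qed
  have pq: "p (z l) = F\<^sub>U (\<nu> (z l))" if l: "l \<le> K" for l
  proof -
    have "{\<omega> \<in> space P. D \<omega> = 1 \<and> Z \<omega> = z l} = {\<omega> \<in> space P. U \<omega> \<in> {..\<nu> (z l)} \<and> Z \<omega> = z l}"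
      by (auto simp: D_def)
    then have "p (z l) = measure P {\<omega> \<in> space P. U \<omega> \<in> {..\<nu> (z l)} \<and> Z \<omega> = z l} / measure P {\<omega> \<in> space P. Z \<omega> = z l}"
      unfolding p_def cond_prob_def by simp
    also have "\<dots> = F\<^sub>U (\<nu> (z l))" using PUZ[of "{..\<nu> (z l)}" "z l"] PU1 Z_pos[OF l] by simp
    finally show ?thesis .
  qed
  have Lint: "set_borel_measurable lborel B (h m)" if "m \<in> {1..M}" "B \<subseteq> {0<..<1}" "B \<in> sets borel" for m B
  proof -
    have "set_integrable lborel B (h m)" by (rule set_integrable_subset[OF h_int[OF that(1)]]) (use that in auto)
    then show ?thesis unfolding set_integrable_def set_borel_measurable_def by (rule borel_measurable_integrable)
  qed
  have row: "\<beta> d $ l = (A d *\<^sub>v \<theta> d) $ l" if d: "d \<in> {0, 1}" and l: "l \<le> K" for d l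
  proof -
    define c where "c = \<nu> (z l)"
    define q where "q = F\<^sub>U c"
    define PZ where "PZ = measure P {\<omega> \<in> space P. Z \<omega> = z l}"
    have q01: "0 < q" "q < 1" using p_bounds[OF l] pq[OF l] unfolding q_def c_def by auto
    have PZ0: "PZ > 0" using Z_pos[OF l] unfolding PZ_def .
    have rhs: "(A d *\<^sub>v \<theta> d) $ l = (\<Sum>j<M + 1. lam h d j q * (if j = 0 then \<mu> d else \<rho> d j))"
      using l pq[OF l] unfolding A_def \<theta>_def q_def c_def
      by (simp add: scalar_prod_def atLeast0LessThan)
    have lhs: "\<beta> d $ l = cond_expect_event P Y (\<lambda>\<omega>. D \<omega> = real d \<and> Z \<omega> = z l)"
      using l unfolding \<beta>_def by simp
    from d show ?thesis
    proof
      assume d0: "d = 0"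
      have num: "(\<integral>\<omega>. Y \<omega> * indicator {\<omega> \<in> space P. D \<omega> = real d \<and> Z \<omega> = z l} \<omega> \<partial>P)
          = (\<integral>\<omega>. Yp 0 \<omega> * indicator {\<omega> \<in> space P. U \<omega> \<in> {c<..} \<and> Z \<omega> = z l} \<omega> \<partial>P)"
        by (rule Bochner_Integration.integral_cong) (auto simp: indicator_def Y_def D_def c_def d0)
      also have "\<dots> = (\<integral>\<omega>. indicator {c<..} (U \<omega>) * Yp 0 \<omega> \<partial>P) * PZ"
        unfolding PZ_def by (rule indep_step[OF prob indep meas_U meas_Z integ mean_indep]) auto
      also have "(\<integral>\<omega>. indicator {c<..} (U \<omega>) * Yp 0 \<omega> \<partial>P)
          = (\<integral>\<omega>. indicator {q<..} (F\<^sub>U (U \<omega>)) * Yp 0 \<omega> \<partial>P)"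
        unfolding q_def F\<^sub>U_def by (rule UV_switch(2)[OF prob meas_U U_cont integ]) (use q01 in \<open>auto simp: q_def F\<^sub>U_def\<close>)
      also have "\<dots> = \<mu> 0 * measure lborel ({0..1} \<inter> {q<..}) + (\<Sum>m = 1..M. \<rho> 0 m * (\<integral>x \<in> {0<..<1} \<inter> {q<..}. h m x \<partial>lborel))"
        unfolding F\<^sub>U_def by (rule V_integral[OF prob meas_U U_cont integ MTE[unfolded F\<^sub>U_def] h_int]) auto
      finally have num0: "(\<integral>\<omega>. Y \<omega> * indicator {\<omega> \<in> space P. D \<omega> = real d \<and> Z \<omega> = z l} \<omega> \<partial>P)
          = (\<mu> 0 * measure lborel ({0..1} \<inter> {q<..}) + (\<Sum>m = 1..M. \<rho> 0 m * (\<integral>x \<in> {0<..<1} \<inter> {q<..}. h m x \<partial>lborel))) * PZ" .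
      have num': "(\<integral>\<omega>. Y \<omega> * indicator {\<omega> \<in> space P. D \<omega> = real d \<and> Z \<omega> = z l} \<omega> \<partial>P)
          = (\<mu> 0 * (1 - q) + (\<Sum>m = 1..M. \<rho> 0 m * (LBINT u=q..1. h m u))) * PZ"
      proof -
        have "{0..1} \<inter> {q<..} = {q<..1::real}" using q01 by auto
        moreover have "{0<..<1} \<inter> {q<..} = {q<..<1::real}" using q01 by auto
        moreover have "(LBINT u=q..1. h m u) = (\<integral>x \<in> {q<..<1}. h m x \<partial>lborel)" for m
        proof -
          have "einterval (ereal q) 1 = {q<..<1}" unfolding einterval_def by auto
          then show ?thesis using q01 by (simp add: interval_lebesgue_integral_def)
        qed
        ultimately show "?thesis" unfolding num0 using q01 by simp
      qed
      have den: "measure P {\<omega> \<in> space P. D \<omega> = real d \<and> Z \<omega> = z l} = (1 - q) * PZ"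
      proof -
        have "{\<omega> \<in> space P. D \<omega> = real d \<and> Z \<omega> = z l} = {\<omega> \<in> space P. U \<omega> \<in> {c<..} \<and> Z \<omega> = z l}"
          by (auto simp: D_def c_def d0)
        then show ?thesis using PUZ[of "{c<..}" "z l"] PU0[of c] unfolding PZ_def q_def by simp
      qed
      have "\<beta> d $ l = (\<mu> 0 * (1 - q) + (\<Sum>m = 1..M. \<rho> 0 m * (LBINT u=q..1. h m u))) * PZ / ((1 - q) * PZ)"
        using lhs num' den unfolding cond_expect_event_def by simp
      also have "\<dots> = (\<Sum>j<M + 1. lam h d j q * (if j = 0 then \<mu> d else \<rho> d j))"
        unfolding d0 by (rule row_arith) (use q01 PZ0 in \<open>auto simp: lam_def\<close>)
      finally show ?thesis using rhs by simp
    next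
      assume "d \<in> {1}"
      then have d1: "d = 1" by simp
      have "(\<integral>\<omega>. Y \<omega> * indicator {\<omega> \<in> space P. D \<omega> = real d \<and> Z \<omega> = z l} \<omega> \<partial>P)
          = (\<integral>\<omega>. Yp 1 \<omega> * indicator {\<omega> \<in> space P. U \<omega> \<in> {..c} \<and> Z \<omega> = z l} \<omega> \<partial>P)"
        by (rule Bochner_Integration.integral_cong) (auto simp: indicator_def Y_def D_def c_def d1)
      also have "\<dots> = (\<integral>\<omega>. indicator {..c} (U \<omega>) * Yp 1 \<omega> \<partial>P) * PZ"
        unfolding PZ_def by (rule indep_step[OF prob indep meas_U meas_Z integ mean_indep]) auto
      also have "(\<integral>\<omega>. indicator {..c} (U \<omega>) * Yp 1 \<omega> \<partial>P)
          = (\<integral>\<omega>. indicator {..q} (F\<^sub>U (U \<omega>)) * Yp 1 \<omega> \<partial>P)"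
        unfolding q_def F\<^sub>U_def by (rule UV_switch(1)[OF prob meas_U U_cont integ]) (use q01 in \<open>auto simp: q_def F\<^sub>U_def\<close>)
      also have "\<dots> = \<mu> 1 * measure lborel ({0..1} \<inter> {..q}) + (\<Sum>m = 1..M. \<rho> 1 m * (\<integral>x \<in> {0<..<1} \<inter> {..q}. h m x \<partial>lborel))"
        unfolding F\<^sub>U_def by (rule V_integral[OF prob meas_U U_cont integ MTE[unfolded F\<^sub>U_def] h_int]) auto
      finally have num: "(\<integral>\<omega>. Y \<omega> * indicator {\<omega> \<in> space P. D \<omega> = real d \<and> Z \<omega> = z l} \<omega> \<partial>P)
          = (\<mu> 1 * measure lborel ({0..1} \<inter> {..q}) + (\<Sum>m = 1..M. \<rho> 1 m * (\<integral>x \<in> {0<..<1} \<inter> {..q}. h m x \<partial>lborel))) * PZ" .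
      have num': "(\<integral>\<omega>. Y \<omega> * indicator {\<omega> \<in> space P. D \<omega> = real d \<and> Z \<omega> = z l} \<omega> \<partial>P)
          = (\<mu> 1 * q + (\<Sum>m = 1..M. \<rho> 1 m * (LBINT u=0..q. h m u))) * PZ"
      proof -
        have s1: "{0..1} \<inter> {..q} = {0..q::real}" using q01 by auto
        have s2: "(\<integral>x \<in> {0<..<1} \<inter> {..q}. h m x \<partial>lborel) = (LBINT u=0..q. h m u)" if m: "m \<in> {1..M}" for m
        proof -
          have e: "{0<..<1} \<inter> {..q} = {0<..q::real}" using q01 by auto
          have "(\<integral>x \<in> {0<..q}. h m x \<partial>lborel) = (\<integral>x \<in> {0<..<q}. h m x \<partial>lborel)"
          proof (rule set_integral_cong_set)
            show "set_borel_measurable lborel {0<..<q} (h m)" by (rule Lint[OF m]) (use q01 in auto)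
            show "set_borel_measurable lborel {0<..q} (h m)" by (rule Lint[OF m]) (use q01 in auto)
            show "AE x in lborel. (x \<in> {0<..<q}) = (x \<in> {0<..q})"
              using AE_lborel_singleton[of q] by eventually_elim auto
          qed
          moreover have "einterval 0 (ereal q) = {0<..<q}" unfolding einterval_def by auto
          ultimately show ?thesis unfolding e using q01 by (simp add: interval_lebesgue_integral_def)
        qed
        have "(\<Sum>m = 1..M. \<rho> 1 m * (\<integral>x \<in> {0<..<1} \<inter> {..q}. h m x \<partial>lborel))
            = (\<Sum>m = 1..M. \<rho> 1 m * (LBINT u=0..q. h m u))"
          by (rule sum.cong) (use s2 in auto)
        then show ?thesis unfolding num s1 using q01 by simp
      qed
      have den: "measure P {\<omega> \<in> space P. D \<omega> = real d \<and> Z \<omega> = z l} = q * PZ"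
      proof -
        have "{\<omega> \<in> space P. D \<omega> = real d \<and> Z \<omega> = z l} = {\<omega> \<in> space P. U \<omega> \<in> {..c} \<and> Z \<omega> = z l}"
          by (auto simp: D_def c_def d1)
        then show ?thesis using PUZ[of "{..c}" "z l"] PU1[of c] unfolding PZ_def q_def by simp
      qed
      have "\<beta> d $ l = (\<mu> 1 * q + (\<Sum>m = 1..M. \<rho> 1 m * (LBINT u=0..q. h m u))) * PZ / (q * PZ)"
        using lhs num' den unfolding cond_expect_event_def by simp
      also have "\<dots> = (\<Sum>j<M + 1. lam h d j q * (if j = 0 then \<mu> d else \<rho> d j))"
        unfolding d1 by (rule row_arith) (use q01 PZ0 in \<open>auto simp: lam_def\<close>)
      finally show ?thesis using rhs by simp
    qed
  qed
  show ?thesis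
  proof (rule ballI, intro conjI)
    fix d :: nat assume d: "d \<in> {0, 1}"
    have Ad: "A d = mat (K + 1) (M + 1) (\<lambda>(l, m). lam h d m ((\<lambda>l. p (z l)) l))" unfolding A_def by simp
    have xS: "\<And>l. l \<le> K \<Longrightarrow> p (z l) \<in> {0<..<1}" using p_bounds by auto
    have card: "card ((\<lambda>l. p (z l)) ` {0..K}) \<ge> M + 1" using rank_cond by (simp add: image_image)
    note LA = linalg[where f="lam h d" and x="\<lambda>l. p (z l)" and K=K and n="M + 1" and S="{0<..<1}", OF unisolv[OF d] xS card, folded Ad]
    show eq: "\<beta> d = A d *\<^sub>v \<theta> d"
    proof (rule eq_vecI)
      show "dim_vec (\<beta> d) = dim_vec (A d *\<^sub>v \<theta> d)" unfolding \<beta>_def A_def by simp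
      fix l assume "l < dim_vec (A d *\<^sub>v \<theta> d)"
      then have "l \<le> K" unfolding A_def by simp
      then show "\<beta> d $ l = (A d *\<^sub>v \<theta> d) $ l" by (rule row[OF d])
    qed
    show "vec_space.rank (K + 1) (A d) = M + 1" by (rule LA(1)) simp
    show "\<forall>t \<in> carrier_vec (M + 1). A d *\<^sub>v t = \<beta> d \<longrightarrow> t = \<theta> d"
    proof (intro ballI impI)
      fix t :: "real vec" assume t: "t \<in> carrier_vec (M + 1)" "A d *\<^sub>v t = \<beta> d"
      have th: "\<theta> d \<in> carrier_vec (M + 1)" unfolding \<theta>_def by simp
      show "t = \<theta> d" by (rule LA(2)) (use t eq th in auto)
    qed
  qed
qed

end
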